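(* Let $\langle B,\wedge,{}'\rangle$ be an algebra with $\wedge$ binary and ${}'$ unary satisfying $x\wedge(y\wedge z)\approx (y\wedge x)\wedge z$ and $x\approx (x'\wedge y)'\wedge(x'\wedge y')'$. Then $x\wedge(y\wedge u)=x\wedge(u\wedge y)$ for all $x,y,u\in B$. *)

theory Defs
  imports Main
begin

end

theory Submission
  imports Defs
begin

theorem lemma6p12:
  fixes meet :: "'a \<Rightarrow> 'a \<Rightarrow> 'a" and c :: "'a \<Rightarrow> 'a"
  assumes ax1: "\<And>x y z. meet x (meet y z) = meet (meet y x) z"
    and ax2: "\<And>x y. x = meet (c (meet (c x) y)) (c (meet (c x) (c y)))"
  shows "\<forall>x y u. meet x (meet y u) = meet x (meet u y)"
proof -
  have s5: "\<And>x y z. meet (c (meet (c x) (c y))) (meet (c (meet (c x) y)) z) = meet x z"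
    by (metis ax1 ax2)
  have s6: "\<And>x y. meet (c (meet (c x) (c y))) x = meet x (c (meet (c x) (c y)))"
    by (metis s5 ax2)
  have s7: "\<And>x y z w. meet x (meet y (meet z w)) = meet x (meet z (meet y w))"
    by (metis ax1)
  have s8: "\<And>x y. meet (c x) (meet (c x) y) = meet y (meet (c x) (c x))"
    by (metis s6 ax2 ax1)
  have s9: "\<And>x y z. meet x (meet y (meet (c z) (c z))) = meet (c z) (meet y (meet (c z) x))"
    by (metis s7 s8 ax1)
  have s10: "\<And>x y z. meet (c x) (meet y (meet (c x) z)) = meet z (meet (c x) (meet y (c x)))"
    by (metis s7 s9)
  have s11: "\<And>x y z. meet (c (meet (c x) y)) (meet z x) = meet x (meet z (c (meet (c x) y)))"
    by (metis s5 s10 ax2)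
  have s12: "\<And>x y z. meet (c x) (meet (c (meet (c (meet (c x) y)) (meet (c x) (c y)))) z) = meet y (meet (c x) z)"
    by (metis s5 ax2 ax1)
  have s13: "\<And>x y. meet (c x) (c (meet (c (meet (c x) y)) (c (c (meet (c x) (c y)))))) = meet (c x) y"
    by (metis ax2)
  have s15: "\<And>x1 x2 x3 x4. meet (c (meet x1 (meet (c x2) x3))) (meet x4 x2) = meet x2 (meet x4 (c (meet x1 (meet (c x2) x3))))"
    by (metis s11 s12)
  have s16: "\<And>x y z. meet (c (meet (c x) y)) (meet (c (meet (c x) (meet (c (meet (c x) y)) (c (c (meet (c x) (c y))))))) z) = meet x z"
    by (metis s5 s13)
  have s17: "\<And>x y. meet (c (meet (c x) (meet (c (meet (c x) y)) (c (c (meet (c x) (c y))))))) (c (meet (c x) y)) = x"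
    by (metis ax2 s13)
  have comm: "\<And>x y. meet x y = meet y x"
    by (metis s15 s16 s17)
  show ?thesis using comm by simp
qed

end
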